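(* Let $c>0$ and let $(\vartheta_n)$ be a sequence with $0\le\vartheta_n\nearrow\vartheta_\infty$, $\vartheta_\infty\in(0,1)$. For each $n$ let $T_n>0$ and $u_n$ be a classical entire solution of $\partial_t u=\partial_{xx}u-c\partial_x u$ ($x>0$), $\partial_x u=1+\vartheta_n h(u)$ ($x=0$), with $u_n(\cdot,t)\in Y_c$, $u_n(\cdot,T_n)=u_n(\cdot,0)-2\pi$, $\partial_t u_n<0$, and $u_n(0,0)=0$. Then there exist $\lambda,\mu>0$ such that for all $n$, $$\frac{2\pi}{\mu}\le T_n\le\frac{2\pi}{\lambda}.$$
   Context: $h\in C^2(\mathbb{R},\mathbb{R})$ is $2\pi$-periodic with $\max h=1$, $\min h=h(\pi)=-1$. $Y_c$ is the space of $v$ on $[0,\infty)$ with $x\mapsto e^{-cx/2}v(x)$ bounded and uniformly continuous. *)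

theory Defs
  imports "HOL-Analysis.Analysis"
begin

definition C2_fun :: "(real \<Rightarrow> real) \<Rightarrow> bool" where
  "C2_fun h \<longleftrightarrow> (\<exists>h' h''. (\<forall>x. (h has_real_derivative h' x) (at x)) \<and>
      (\<forall>x. (h' has_real_derivative h'' x) (at x)) \<and> continuous_on UNIV h'')"

definition in_Yc :: "real \<Rightarrow> (real \<Rightarrow> real) \<Rightarrow> bool" where
  "in_Yc c v \<longleftrightarrow>
     bounded ((\<lambda>x. exp (- c * x / 2) * v x) ` {0..}) \<and>
     uniformly_continuous_on {0..} (\<lambda>x. exp (- c * x / 2) * v x)"

definition classical_entire_sol ::
  "(real \<Rightarrow> real) \<Rightarrow> real \<Rightarrow> real \<Rightarrow> (real \<Rightarrow> real \<Rightarrow> real) \<Rightarrow> bool" where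
  "classical_entire_sol h c \<theta> u \<longleftrightarrow>
     continuous_on ({0..} \<times> UNIV) (\<lambda>(x,t). u x t) \<and>
     (\<exists>ux uxx ut.
        (\<forall>x\<ge>0. \<forall>t. ((\<lambda>y. u y t) has_real_derivative ux x t) (at x within {0..})) \<and>
        continuous_on ({0..} \<times> UNIV) (\<lambda>(x,t). ux x t) \<and>
        (\<forall>x>0. \<forall>t. ((\<lambda>y. ux y t) has_real_derivative uxx x t) (at x)) \<and>
        (\<forall>x>0. \<forall>t. ((\<lambda>s. u x s) has_real_derivative ut x t) (at t)) \<and>
        continuous_on ({0<..} \<times> UNIV) (\<lambda>(x,t). uxx x t) \<and>
        continuous_on ({0<..} \<times> UNIV) (\<lambda>(x,t). ut x t) \<and>
        (\<forall>x>0. \<forall>t. ut x t = uxx x t - c * ux x t) \<and>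
        (\<forall>t. ux 0 t = 1 + \<theta> * h (u 0 t)))"

end

theory Submission
  imports Defs "HOL-Real_Asymp.Real_Asymp"
begin

lemma cont_slice:
  assumes "continuous_on (A \<times> UNIV) (\<lambda>(x,t). f x t)" "x \<in> A"
  shows "continuous_on S (f x)"
proof -
  have "continuous_on S ((\<lambda>(x,t). f x t) \<circ> (\<lambda>t. (x,t)))"
    apply (rule continuous_on_compose)
     apply (intro continuous_intros)
    apply (rule continuous_on_subset[OF assms(1)])
    using assms(2) by auto
  then show ?thesis by (simp add: o_def)
qed

lemma key:
 fixes u ux uxx ut :: "real \<Rightarrow> real \<Rightarrow> real" and c T B :: real
 assumes c: "c>0" and T: "T>0"
 and cu: "continuous_on ({0..} \<times> UNIV) (\<lambda>(x,t). u x t)"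
 and dux: "\<forall>x\<ge>0. \<forall>t. ((\<lambda>y. u y t) has_real_derivative ux x t) (at x within {0..})"
 and cux: "continuous_on ({0..} \<times> UNIV) (\<lambda>(x,t). ux x t)"
 and duxx: "\<forall>x>0. \<forall>t. ((\<lambda>y. ux y t) has_real_derivative uxx x t) (at x)"
 and dut: "\<forall>x>0. \<forall>t. ((\<lambda>s. u x s) has_real_derivative ut x t) (at t)"
 and cuxx: "continuous_on ({0<..} \<times> UNIV) (\<lambda>(x,t). uxx x t)"
 and cut: "continuous_on ({0<..} \<times> UNIV) (\<lambda>(x,t). ut x t)"
 and pde: "\<forall>x>0. \<forall>t. ut x t = uxx x t - c * ux x t"
 and per: "\<forall>x\<ge>0. u x T = u x 0 - 2*pi"
 and mono: "\<forall>x\<ge>0. \<forall>t\<in>{0..T}. u x T \<le> u x t \<and> u x t \<le> u x 0"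
 and bnd: "\<forall>x\<ge>0. \<bar>exp (-c*x/2) * u x 0\<bar> \<le> B"
 shows "integral {0..T} (ux 0) = 2*pi/c"
proof -
  define G where "G x = integral {0..T} (u x)" for x
  define G1 where "G1 x = integral {0..T} (ux x)" for x
  define G2 where "G2 x = integral {0..T} (uxx x)" for x
  have intu: "u x integrable_on {0..T}" if "x \<ge> 0" for x
    using cont_slice[OF cu] that by (intro integrable_continuous_interval) auto
  have intux: "ux x integrable_on {0..T}" if "x \<ge> 0" for x
    using cont_slice[OF cux] that by (intro integrable_continuous_interval) auto
  have intuxx: "uxx x integrable_on {0..T}" if "x > 0" for x
    using cont_slice[OF cuxx] that by (intro integrable_continuous_interval) auto
  have intut: "ut x integrable_on {0..T}" if "x > 0" for x
    using cont_slice[OF cut] that by (intro integrable_continuous_interval) auto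
  have dG: "(G has_field_derivative G1 x) (at x within {0..})" if "x \<ge> 0" for x
  proof -
    have "((\<lambda>x. integral (cbox 0 T) (u x)) has_field_derivative integral (cbox 0 T) (ux x)) (at x within {0..})"
      apply (rule leibniz_rule_field_derivative)
      using dux intu that by (auto intro: continuous_on_subset[OF cux])
    then show ?thesis unfolding G_def G1_def by simp
  qed
  have dG1: "(G1 has_field_derivative G2 x) (at x)" if "x > 0" for x
  proof -
    have "((\<lambda>x. integral (cbox 0 T) (ux x)) has_field_derivative integral (cbox 0 T) (uxx x)) (at x within {0<..})"
      apply (rule leibniz_rule_field_derivative)
      subgoal for x t using duxx by (simp add: has_field_derivative_at_within)
      subgoal for x using intux by simp
      subgoal by (rule continuous_on_subset[OF cuxx]) auto
      using that by auto
    moreover have "at x within {0<..} = at x" using that by (intro at_within_open) auto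
    ultimately show ?thesis unfolding G1_def G2_def by simp
  qed
  have ode: "G2 x - c * G1 x = - 2*pi" if "x > 0" for x
  proof -
    have "(ut x has_integral u x T - u x 0) {0..T}"
      apply (rule fundamental_theorem_of_calculus)
      using T dut that by (auto simp: has_real_derivative_iff_has_vector_derivative[symmetric] intro: has_field_derivative_at_within)
    then have "integral {0..T} (ut x) = -2*pi" using per that by (simp add: integral_unique)
    moreover have "integral {0..T} (ut x) = G2 x - c * G1 x"
    proof -
      have "ut x = (\<lambda>t. uxx x t - c * ux x t)" using pde that by auto
      moreover have "integral {0..T} (\<lambda>t. uxx x t - c * ux x t) = integral {0..T} (uxx x) - integral {0..T} (\<lambda>t. c * ux x t)"
        using intux[of x] intuxx[of x] that by (intro integral_diff integrable_on_mult_right) auto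
      moreover have "integral {0..T} (\<lambda>t. c * ux x t) = c * integral {0..T} (ux x)"
        using intux[of x] that integral_mult[of "ux x" "{0..T}" c] by simp
      ultimately show ?thesis unfolding G1_def G2_def by simp
    qed
    ultimately show ?thesis by simp
  qed
  define \<Psi> where "\<Psi> x = exp (-c*x) * (G1 x - 2*pi/c)" for x
  have "\<exists>K. \<forall>x\<in>{0<..}. \<Psi> x = K"
  proof (rule has_field_derivative_zero_constant)
    fix x :: real assume "x \<in> {0<..}"
    then have x: "x > 0" by simp
    have "(\<Psi> has_field_derivative (-c * exp (-c*x)) * (G1 x - 2*pi/c) + exp (-c*x) * G2 x) (at x)"
      unfolding \<Psi>_def by (auto intro!: derivative_eq_intros dG1[OF x])
    moreover have "(-c * exp (-c*x)) * (G1 x - 2*pi/c) + exp (-c*x) * G2 x = exp (-c*x) * (G2 x - c*G1 x + 2*pi)"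
      using c by (simp add: field_simps)
    ultimately show "(\<Psi> has_field_derivative 0) (at x within {0<..})"
      using ode[OF x] by (auto intro: has_field_derivative_at_within)
  qed simp
  then obtain K where K: "\<And>x. x > 0 \<Longrightarrow> \<Psi> x = K" by auto
  have G1K: "G1 x = K * exp (c*x) + 2*pi/c" if "x > 0" for x
    using K[OF that] unfolding \<Psi>_def by (simp add: exp_minus field_simps)
  define \<Phi> where "\<Phi> x = G x - 2*pi*x/c - K * exp (c*x) / c" for x
  have "\<exists>C. \<forall>x\<in>{0<..}. \<Phi> x = C"
  proof (rule has_field_derivative_zero_constant)
    fix x :: real assume "x \<in> {0<..}"
    then have x: "x > 0" by simp
    have dGa: "(G has_field_derivative G1 x) (at x)"
    proof -
      have "at x within {0..} = at x" using x by (intro at_within_open_subset[of x "{0<..}"]) auto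
      then show ?thesis using dG[of x] x by simp
    qed
    have "(\<Phi> has_field_derivative G1 x - 2*pi/c - K * (c * exp (c*x)) / c) (at x)"
      unfolding \<Phi>_def by (auto intro!: derivative_eq_intros dGa)
    then show "(\<Phi> has_field_derivative 0) (at x within {0<..})"
      using G1K[OF x] c by (auto intro: has_field_derivative_at_within)
  qed simp
  then obtain C where C: "\<And>x. x > 0 \<Longrightarrow> \<Phi> x = C" by auto
  have Gbnd: "\<bar>G x\<bar> \<le> (B * exp (c*x/2) + 2*pi) * T" if x: "x > 0" for x
  proof -
    have "exp (-c*x/2) * \<bar>u x 0\<bar> \<le> B" using bnd x by (simp add: abs_mult)
    then have "exp (c*x/2) * (exp (-c*x/2) * \<bar>u x 0\<bar>) \<le> exp (c*x/2) * B" by simp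
    moreover have "exp (c*x/2) * exp (-c*x/2) = 1" by (simp add: exp_minus[symmetric] exp_add[symmetric])
    ultimately have u0: "\<bar>u x 0\<bar> \<le> B * exp (c*x/2)"
      by (metis mult.assoc mult.commute mult_1)
    have "norm (integral {0..T} (u x)) \<le> (B * exp (c*x/2) + 2*pi) * (T - 0)"
    proof (rule integral_bound)
      show "continuous_on {0..T} (u x)" using cont_slice[OF cu] x by auto
      fix t assume "t \<in> {0..T}"
      then have "u x T \<le> u x t \<and> u x t \<le> u x 0" using mono x by auto
      moreover have "u x T = u x 0 - 2*pi" using per x by simp
      ultimately show "norm (u x t) \<le> B * exp (c*x/2) + 2*pi" using u0 unfolding real_norm_def by linarith
    qed (use T in auto)
    then show ?thesis unfolding G_def by simp
  qed
  have Gform: "G x = C + 2*pi*x/c + K * exp (c*x) / c" if "x > 0" for x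
    using C[OF that] unfolding \<Phi>_def by simp
  have lim1: "((\<lambda>x. exp (-c*x) * G x) \<longlongrightarrow> K/c) at_top"
  proof -
    have "((\<lambda>x. exp(-c*x)*C + 2*pi*x*exp(-c*x)/c + K/c) \<longlongrightarrow> K/c) at_top"
      using c by real_asymp
    moreover have "\<forall>\<^sub>F x in at_top. exp(-c*x)*C + 2*pi*x*exp(-c*x)/c + K/c = exp (-c*x) * G x"
      using eventually_gt_at_top[of 0]
    proof eventually_elim
      case (elim x)
      have "exp (-c*x) * exp (c*x) = 1" by (simp add: exp_add[symmetric])
      show ?case unfolding Gform[OF elim] using c by (simp add: exp_minus field_simps)
    qed
    ultimately show ?thesis by (rule Lim_transform_eventually)
  qed
  have lim2: "((\<lambda>x. exp (-c*x) * G x) \<longlongrightarrow> 0) at_top"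
  proof (rule Lim_null_comparison)
    show "((\<lambda>x. (B * exp (-c*x/2) + 2*pi*exp(-c*x)) * T) \<longlongrightarrow> 0) at_top"
      using c by real_asymp
    show "\<forall>\<^sub>F x in at_top. norm (exp (-c*x) * G x) \<le> (B * exp (-c*x/2) + 2*pi*exp(-c*x)) * T"
      using eventually_gt_at_top[of 0]
    proof eventually_elim
      case (elim x)
      have "norm (exp (-c*x) * G x) = exp (-c*x) * \<bar>G x\<bar>" by (simp add: abs_mult)
      also have "\<dots> \<le> exp (-c*x) * ((B * exp (c*x/2) + 2*pi) * T)"
        using Gbnd[OF elim] by (intro mult_left_mono) auto
      also have "\<dots> = (B * (exp (-c*x) * exp (c*x/2)) + 2*pi*exp(-c*x)) * T"
        by (simp add: algebra_simps)
      also have "exp (-c*x) * exp (c*x/2) = exp (-c*x/2)"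
        by (simp add: exp_add[symmetric])
      finally show ?case .
    qed
  qed
  have "K/c = 0" using tendsto_unique[OF _ lim1 lim2] by simp
  then have K0: "K = 0" using c by simp
  have G1c: "G1 x = 2*pi/c" if "x > 0" for x using G1K[OF that] K0 by simp
  have contG1: "continuous_on {0..} G1"
  proof -
    have "continuous_on {0..} (\<lambda>x. integral (cbox 0 T) (ux x))"
      by (rule integral_continuous_on_param, rule continuous_on_subset[OF cux]) auto
    then show ?thesis unfolding G1_def by simp
  qed
  have "(G1 \<longlongrightarrow> G1 0) (at 0 within {0..})"
    using contG1 by (simp add: continuous_on_def)
  then have l1: "(G1 \<longlongrightarrow> G1 0) (at_right 0)"
    by (rule tendsto_within_subset) auto
  have l2: "(G1 \<longlongrightarrow> 2*pi/c) (at_right 0)"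
  proof (rule Lim_transform_eventually)
    show "((\<lambda>_. 2*pi/c) \<longlongrightarrow> 2*pi/c) (at_right 0)" by simp
    show "\<forall>\<^sub>F x in at_right 0. 2*pi/c = G1 x"
      using eventually_at_right_less[of "0::real"] by eventually_elim (simp add: G1c)
  qed
  have "G1 0 = 2*pi/c" using tendsto_unique[OF _ l1 l2] by simp
  then show ?thesis unfolding G1_def .
qed

lemma dec_lemma:
  fixes f :: "real \<Rightarrow> real"
  assumes "\<forall>t. \<exists>D. (f has_real_derivative D) (at t) \<and> D < 0" "a \<le> b"
  shows "f b \<le> f a"
proof (cases "a < b")
  case True
  have "f a > f b" by (rule DERIV_neg_imp_decreasing[OF True]) (use assms(1) in auto)
  then show ?thesis by simp
qed (use assms in auto)

theorem lemma15:
  fixes h :: "real \<Rightarrow> real" and c :: real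
    and \<theta> :: "nat \<Rightarrow> real" and \<theta>inf :: real
    and T :: "nat \<Rightarrow> real" and u :: "nat \<Rightarrow> real \<Rightarrow> real \<Rightarrow> real"
  assumes h_C2: "C2_fun h"
    and h_per: "\<forall>x. h (x + 2 * pi) = h x"
    and h_max: "(\<forall>x. h x \<le> 1) \<and> (\<exists>x. h x = 1)"
    and h_min: "(\<forall>x. h x \<ge> -1) \<and> h pi = -1"
    and c_pos: "c > 0"
    and th_nonneg: "\<forall>n. 0 \<le> \<theta> n"
    and th_mono: "incseq \<theta>"
    and th_lim: "\<theta> \<longlonglongrightarrow> \<theta>inf"
    and thinf: "0 < \<theta>inf" "\<theta>inf < 1"
    and T_pos: "\<forall>n. T n > 0"
    and sol: "\<forall>n. classical_entire_sol h c (\<theta> n) (u n)"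
    and inY: "\<forall>n t. in_Yc c (\<lambda>x. u n x t)"
    and period: "\<forall>n x. x \<ge> 0 \<longrightarrow> u n x (T n) = u n x 0 - 2 * pi"
    and decr: "\<forall>n x t. x \<ge> 0 \<longrightarrow>
                 (\<exists>D. ((\<lambda>s. u n x s) has_real_derivative D) (at t) \<and> D < 0)"
    and norm: "\<forall>n. u n 0 0 = 0"
  shows "\<exists>lam \<mu>. lam > 0 \<and> \<mu> > 0 \<and> (\<forall>n. 2 * pi / \<mu> \<le> T n \<and> T n \<le> 2 * pi / lam)"
proof -
  have bounds: "T n * (1 - \<theta> n) \<le> 2*pi/c \<and> 2*pi/c \<le> T n * (1 + \<theta> n)" for n
  proof -
    obtain ux uxx ut where
      cu: "continuous_on ({0..} \<times> UNIV) (\<lambda>(x,t). u n x t)" and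
      dux: "\<forall>x\<ge>0. \<forall>t. ((\<lambda>y. u n y t) has_real_derivative ux x t) (at x within {0..})" and
      cux: "continuous_on ({0..} \<times> UNIV) (\<lambda>(x,t). ux x t)" and
      duxx: "\<forall>x>0. \<forall>t. ((\<lambda>y. ux y t) has_real_derivative uxx x t) (at x)" and
      dut: "\<forall>x>0. \<forall>t. ((\<lambda>s. u n x s) has_real_derivative ut x t) (at t)" and
      cuxx: "continuous_on ({0<..} \<times> UNIV) (\<lambda>(x,t). uxx x t)" and
      cut: "continuous_on ({0<..} \<times> UNIV) (\<lambda>(x,t). ut x t)" and
      pde: "\<forall>x>0. \<forall>t. ut x t = uxx x t - c * ux x t" and
      bc: "\<forall>t. ux 0 t = 1 + \<theta> n * h (u n 0 t)"
      using sol[rule_format, of n] unfolding classical_entire_sol_def by blast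
    have Tn: "T n > 0" using T_pos by simp
    have per: "\<forall>x\<ge>0. u n x (T n) = u n x 0 - 2*pi" using period by simp
    have mono: "\<forall>x\<ge>0. \<forall>t\<in>{0..T n}. u n x (T n) \<le> u n x t \<and> u n x t \<le> u n x 0"
    proof (intro allI impI ballI conjI)
      fix x t :: real assume x: "x \<ge> 0" and t: "t \<in> {0..T n}"
      have d: "\<forall>t. \<exists>D. ((\<lambda>s. u n x s) has_real_derivative D) (at t) \<and> D < 0" using decr x by simp
      show "u n x (T n) \<le> u n x t" using dec_lemma[OF d, of t "T n"] t by simp
      show "u n x t \<le> u n x 0" using dec_lemma[OF d, of 0 t] t by simp
    qed
    have "bounded ((\<lambda>x. exp (- c * x / 2) * u n x 0) ` {0..})"
      using inY unfolding in_Yc_def by simp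
    then obtain B where B: "\<forall>y\<in>(\<lambda>x. exp (- c * x / 2) * u n x 0) ` {0..}. norm y \<le> B"
      unfolding bounded_iff by blast
    have bnd: "\<forall>x\<ge>0. \<bar>exp (-c*x/2) * u n x 0\<bar> \<le> B" using B by auto
    have I: "integral {0..T n} (ux 0) = 2*pi/c"
      by (rule key[OF c_pos Tn cu dux cux duxx dut cuxx cut pde per mono bnd])
    have intux: "ux 0 integrable_on {0..T n}"
      using cont_slice[OF cux] by (intro integrable_continuous_interval) auto
    have th: "0 \<le> \<theta> n" using th_nonneg by simp
    have lo: "1 - \<theta> n \<le> ux 0 t" for t
    proof -
      have "-1 \<le> h (u n 0 t)" using h_min by simp
      then have "\<theta> n * (-1) \<le> \<theta> n * h (u n 0 t)" using th by (intro mult_left_mono) auto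
      then show ?thesis using bc by simp
    qed
    have hi: "ux 0 t \<le> 1 + \<theta> n" for t
    proof -
      have "h (u n 0 t) \<le> 1" using h_max by simp
      then have "\<theta> n * h (u n 0 t) \<le> \<theta> n * 1" using th by (intro mult_left_mono) auto
      then show ?thesis using bc by simp
    qed
    have "integral {0..T n} (\<lambda>_. 1 - \<theta> n) \<le> integral {0..T n} (ux 0)"
      by (rule integral_le) (use intux lo in auto)
    moreover have "integral {0..T n} (ux 0) \<le> integral {0..T n} (\<lambda>_. 1 + \<theta> n)"
      by (rule integral_le) (use intux hi in auto)
    ultimately show ?thesis using I Tn by (simp add: mult.commute)
  qed
  have thle: "\<theta> n \<le> \<theta>inf" for n by (rule incseq_le[OF th_mono th_lim])
  show ?thesis
  proof (intro exI conjI allI)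
    show "c * (1 - \<theta>inf) > 0" using c_pos thinf by simp
    show "2 * c > 0" using c_pos by simp
    fix n
    have b: "T n * (1 - \<theta> n) \<le> 2*pi/c" "2*pi/c \<le> T n * (1 + \<theta> n)" using bounds[of n] by auto
    have Tn: "T n > 0" using T_pos by simp
    have t1: "\<theta> n \<le> \<theta>inf" "\<theta> n \<le> 1" using thle[of n] thinf by auto
    have "T n * (1 - \<theta>inf) \<le> T n * (1 - \<theta> n)" using Tn t1 by (intro mult_left_mono) auto
    then have "T n * (1 - \<theta>inf) \<le> 2*pi/c" using b by linarith
    then show "T n \<le> 2 * pi / (c * (1 - \<theta>inf))"
      using c_pos thinf by (simp add: field_simps)
    have "T n * (1 + \<theta> n) \<le> T n * 2" using Tn t1 by (intro mult_left_mono) auto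
    then have "2*pi/c \<le> T n * 2" using b by linarith
    then show "2 * pi / (2 * c) \<le> T n"
      using c_pos by (simp add: field_simps)
  qed
qed

end
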